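(* Fix an integer $c$ and a real number $\alpha>0$. Then for all sufficiently large $n$ the following holds, with $h=\left\lfloor\frac{n+c}{12e\alpha}\right\rfloor$ and $w=\frac{n+c}{\alpha}$: if $v_1<\cdots<v_n$ are positive real numbers satisfying $v_{i+h}\ge w v_i$ for every $1\le i\le n-h$, then $\mathrm{ML}(v_1,\ldots,v_n)>\frac{\alpha}{n+c}$.
   Context: For a real number $x$, $\Vert x\Vert$ denotes the distance from $x$ to the nearest integer. For positive real numbers $v_1,\ldots,v_n$, the maximum loneliness is $\mathrm{ML}(v_1,\ldots,v_n)=\sup_{t\in\mathbb{R}}\min_{1\le i\le n}\Vert t v_i\Vert$. Here $e$ is the base of the natural logarithm. *)

theory Defs
  imports "HOL-Analysis.Analysis"
begin

definition dist_nint :: "real \<Rightarrow> real" where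
  "dist_nint x = (INF k::int. \<bar>x - real_of_int k\<bar>)"

definition max_loneliness :: "nat \<Rightarrow> (nat \<Rightarrow> real) \<Rightarrow> real" where
  "max_loneliness n v = (SUP t::real. Min ((\<lambda>i. dist_nint (t * v i)) ` {1..n}))"

end

theory Submission
  imports Defs
begin

lemma dist_nint_eq: "dist_nint x = \<bar>x - of_int (round x)\<bar>"
  unfolding dist_nint_def
  by (rule cInf_eq_minimum) (auto simp: round_diff_minimal)

lemma dist_nint_le: "dist_nint x \<le> 1/2"
  unfolding dist_nint_eq using of_int_round_ge[of x] of_int_round_le[of x] by linarith

lemma dist_nint_gt:
  assumes "\<forall>m::int. \<bar>x - of_int m\<bar> > d" shows "dist_nint x > d"
  using assms unfolding dist_nint_eq by blast

lemma card_int_interval: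
  fixes x y :: real assumes "x \<le> y + 1"
  shows "real (card {m::int. x \<le> m \<and> m \<le> y}) \<le> y - x + 1"
proof -
  have e: "{m::int. x \<le> m \<and> m \<le> y} = {\<lceil>x\<rceil>..\<lfloor>y\<rfloor>}"
    by (auto simp: ceiling_le_iff le_floor_iff)
  have f1: "real_of_int \<lfloor>y\<rfloor> \<le> y" by simp
  have f2: "x \<le> real_of_int \<lceil>x\<rceil>" by simp
  have "real (card {\<lceil>x\<rceil>..\<lfloor>y\<rfloor>}) \<le> y - x + 1"
  proof (cases "\<lfloor>y\<rfloor> - \<lceil>x\<rceil> + 1 \<ge> 0")
    case True
    then have "real (nat (\<lfloor>y\<rfloor> - \<lceil>x\<rceil> + 1)) = real_of_int \<lfloor>y\<rfloor> - real_of_int \<lceil>x\<rceil> + 1" by simp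
    then show ?thesis using f1 f2 by (simp only: card_atLeastAtMost_int)
  next
    case False
    then show ?thesis using assms by simp
  qed
  then show ?thesis unfolding e .
qed

lemma finite_int_interval: "finite {m::int. x \<le> m \<and> m \<le> (y::real)}"
proof -
  have "{m::int. x \<le> m \<and> m \<le> y} = {\<lceil>x\<rceil>..\<lfloor>y\<rfloor>}"
    by (auto simp: ceiling_le_iff le_floor_iff)
  then show ?thesis by simp
qed

lemma card_nat_interval:
  fixes x y :: real assumes "x \<le> y + 1"
  shows "real (card {b::nat. x \<le> b \<and> b \<le> y}) \<le> y - x + 1"
proof -
  have sub: "int ` {b::nat. x \<le> b \<and> b \<le> y} \<subseteq> {m::int. x \<le> m \<and> m \<le> y}" by auto
  have "card {b::nat. x \<le> b \<and> b \<le> y} = card (int ` {b::nat. x \<le> b \<and> b \<le> y})"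
    by (simp add: card_image)
  also have "\<dots> \<le> card {m::int. x \<le> m \<and> m \<le> y}"
    by (rule card_mono[OF finite_int_interval sub])
  finally show ?thesis using card_int_interval[OF assms] by linarith
qed

lemma finite_nat_interval: "finite {b::nat. x \<le> b \<and> b \<le> (y::real)}"
proof -
  have "{b::nat. x \<le> b \<and> b \<le> y} \<subseteq> {..nat \<lceil>y\<rceil>}"
  proof
    fix b assume "b \<in> {b::nat. x \<le> b \<and> b \<le> y}"
    then have "real b \<le> y" by simp
    then have "real b \<le> real_of_int \<lceil>y\<rceil>" using le_of_int_ceiling[of y] by linarith
    then have "int b \<le> \<lceil>y\<rceil>" by linarith
    then show "b \<in> {..nat \<lceil>y\<rceil>}" by simp
  qed
  then show ?thesis using finite_subset by blast
qed

lemma bad_blocks_card: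
  fixes l d :: real and a r :: nat
  assumes l: "l > 0" and d: "d \<ge> 0"
  shows "real (card {b. a \<le> b \<and> b < a + r \<and> (\<exists>m::int. m - d \<le> (real b + 1) * l \<and> real b * l \<le> m + d)})
     \<le> (r * l + 2 * d + 1) * (2 * d / l + 2)"
proof -
  define M where "M = {m::int. a * l - d \<le> m \<and> m \<le> (a + r) * l + d}"
  define I where "I m = {b::nat. (m - d) / l - 1 \<le> b \<and> b \<le> (m + d) / l}" for m :: int
  have sub: "{b. a \<le> b \<and> b < a + r \<and> (\<exists>m::int. m - d \<le> (real b + 1) * l \<and> real b * l \<le> m + d)}
     \<subseteq> (\<Union>m\<in>M. I m)"
  proof
    fix b assume "b \<in> {b. a \<le> b \<and> b < a + r \<and> (\<exists>m::int. m - d \<le> (real b + 1) * l \<and> real b * l \<le> m + d)}"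
    then obtain m :: int where b: "a \<le> b" "b < a + r" "m - d \<le> (real b + 1) * l" "real b * l \<le> m + d" by auto
    have "real a * l \<le> real b * l" using b(1) l by (simp add: mult_right_mono)
    moreover have "(real b + 1) * l \<le> real (a + r) * l" using b(2) l
      by (intro mult_right_mono) auto
    ultimately have "m \<in> M" using b unfolding M_def by auto
    moreover have "b \<in> I m" unfolding I_def using b l
      by (auto simp: field_simps)
    ultimately show "b \<in> (\<Union>m\<in>M. I m)" by blast
  qed
  have fM: "finite M" unfolding M_def by (rule finite_int_interval)
  have fI: "finite (I m)" for m unfolding I_def by (rule finite_nat_interval)
  have cI: "real (card (I m)) \<le> 2 * d / l + 2" for m
  proof -
    have "real (card (I m)) \<le> (m + d) / l - ((m - d) / l - 1) + 1"
      unfolding I_def using l d by (intro card_nat_interval) (auto simp: field_simps)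
    also have "\<dots> = 2 * d / l + 2" using l by (simp add: field_simps)
    finally show ?thesis .
  qed
  have cM: "real (card M) \<le> r * l + 2 * d + 1"
  proof -
    have "real (card M) \<le> ((a + r) * l + d) - (a * l - d) + 1"
      unfolding M_def using l d by (intro card_int_interval) (auto simp: field_simps)
    then show ?thesis by (simp add: algebra_simps)
  qed
  have "card {b. a \<le> b \<and> b < a + r \<and> (\<exists>m::int. m - d \<le> (real b + 1) * l \<and> real b * l \<le> m + d)}
      \<le> card (\<Union>m\<in>M. I m)"
    using sub fM fI by (intro card_mono) auto
  also have "\<dots> \<le> (\<Sum>m\<in>M. card (I m))" by (rule card_UN_le[OF fM])
  finally have nle: "card {b. a \<le> b \<and> b < a + r \<and> (\<exists>m::int. m - d \<le> (real b + 1) * l \<and> real b * l \<le> m + d)}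
      \<le> (\<Sum>m\<in>M. card (I m))" .
  have "real (card {b. a \<le> b \<and> b < a + r \<and> (\<exists>m::int. m - d \<le> (real b + 1) * l \<and> real b * l \<le> m + d)})
      \<le> (\<Sum>m\<in>M. real (card (I m)))" using of_nat_mono[OF nle] by simp
  also have "\<dots> \<le> (\<Sum>m\<in>M. 2 * d / l + 2)" by (intro sum_mono cI)
  also have "\<dots> = real (card M) * (2 * d / l + 2)" by simp
  also have "\<dots> \<le> (r * l + 2 * d + 1) * (2 * d / l + 2)"
    using cM l d by (intro mult_right_mono) auto
  finally show ?thesis .
qed

lemma points_in_cell:
  fixes q a r :: nat assumes "q > 0"
  shows "card {j. a * q \<le> j \<and> j < (a + r) * q \<and> P (j div q)} \<le> q * card {b. a \<le> b \<and> b < a + r \<and> P b}"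
proof -
  let ?B = "{b. a \<le> b \<and> b < a + r \<and> P b}"
  have fB: "finite ?B" by (rule finite_subset[of _ "{..<a+r}"]) auto
  have sub: "{j. a * q \<le> j \<and> j < (a + r) * q \<and> P (j div q)} \<subseteq> (\<Union>b\<in>?B. {b*q..<b*q+q})"
  proof
    fix j assume j: "j \<in> {j. a * q \<le> j \<and> j < (a + r) * q \<and> P (j div q)}"
    have "a * q div q \<le> j div q" using j by (intro div_le_mono) auto
    then have "a \<le> j div q" using assms by simp
    moreover have "j div q < a + r" using j by (simp add: less_mult_imp_div_less)
    moreover have "j \<in> {(j div q)*q..<(j div q)*q+q}" using assms
      proof -
        have "j div q * q + j mod q = j" by (rule div_mult_mod_eq)
        moreover have "j mod q < q" using assms by auto
        ultimately show ?thesis unfolding atLeastLessThan_iff by linarith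
      qed
    ultimately show "j \<in> (\<Union>b\<in>?B. {b*q..<b*q+q})" using j by blast
  qed
  have "card {j. a * q \<le> j \<and> j < (a + r) * q \<and> P (j div q)} \<le> card (\<Union>b\<in>?B. {b*q..<b*q+q})"
    using sub fB by (intro card_mono) auto
  also have "\<dots> \<le> (\<Sum>b\<in>?B. card {b*q..<b*q+q})" by (rule card_UN_le[OF fB])
  also have "\<dots> = q * card ?B" by simp
  finally show ?thesis .
qed

lemma saturated_bound:
  fixes q N :: nat and S Bad :: "nat set" and \<rho> :: real
  assumes q: "q > 0" and dv: "q dvd N" and SN: "S \<subseteq> {..<N}"
    and sat: "\<And>j j'. j \<in> S \<Longrightarrow> j' < N \<Longrightarrow> j div q = j' div q \<Longrightarrow> j' \<in> S"
    and cell: "\<And>B. B < N div q \<Longrightarrow> real (card {j. B*q \<le> j \<and> j < B*q+q \<and> j \<in> Bad}) \<le> \<rho> * q"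
  shows "real (card (S \<inter> Bad)) \<le> \<rho> * card S"
proof -
  define Bs where "Bs = (\<lambda>j. j div q) ` S"
  have fS: "finite S" using SN finite_subset by blast
  have fBs: "finite Bs" unfolding Bs_def using fS by simp
  have Bs_lt: "B < N div q" if "B \<in> Bs" for B
  proof -
    from that obtain j where j: "j \<in> S" "B = j div q" unfolding Bs_def by auto
    obtain k where k: "N = q * k" using dv by blast
    have "j < k * q" using j SN k by (auto simp: mult.commute)
    then have "j div q < k" by (rule less_mult_imp_div_less)
    then show ?thesis using j k q by simp
  qed
  have cellS: "{B*q..<B*q+q} \<subseteq> S" if "B \<in> Bs" for B
  proof
    fix j' assume j': "j' \<in> {B*q..<B*q+q}"
    from that obtain j where j: "j \<in> S" "B = j div q" unfolding Bs_def by auto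
    have "j' div q = B" using j' q by (intro div_nat_eqI) (auto simp: algebra_simps)
    moreover have "j' < N"
    proof -
      obtain k where k: "N = q * k" using dv by blast
      have "B < k" using Bs_lt[OF that] k q by simp
      then have "B * q + q \<le> k * q" by (metis add.commute mult.commute mult_Suc_right Suc_le_eq mult_le_mono2)
      then show ?thesis using j' k by (auto simp: mult.commute)
    qed
    ultimately show "j' \<in> S" using sat[OF j(1)] j(2) by auto
  qed
  have Sdec: "S = (\<Union>B\<in>Bs. {B*q..<B*q+q})"
  proof
    show "S \<subseteq> (\<Union>B\<in>Bs. {B*q..<B*q+q})"
    proof
      fix j assume j: "j \<in> S"
      have "j \<in> {(j div q)*q..<(j div q)*q+q}" using q
        proof -
        have "j div q * q + j mod q = j" by (rule div_mult_mod_eq)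
        moreover have "j mod q < q" using assms by auto
        ultimately show ?thesis unfolding atLeastLessThan_iff by linarith
      qed
      then show "j \<in> (\<Union>B\<in>Bs. {B*q..<B*q+q})" using j unfolding Bs_def by blast
    qed
    show "(\<Union>B\<in>Bs. {B*q..<B*q+q}) \<subseteq> S" using cellS by blast
  qed
  have disj: "{B*q..<B*q+q} \<inter> {B'*q..<B'*q+q} = {}" if "B \<noteq> B'" for B B'
  proof (rule ccontr)
    assume "{B*q..<B*q+q} \<inter> {B'*q..<B'*q+q} \<noteq> {}"
    then obtain j where "j \<in> {B*q..<B*q+q}" "j \<in> {B'*q..<B'*q+q}" by blast
    then have "j div q = B" "j div q = B'" using q by (auto intro!: div_nat_eqI simp: algebra_simps)
    then show False using that by simp
  qed
  have cellB: "j div q = B" if "B*q \<le> j" "j < B*q+q" for j B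
    using that q by (intro div_nat_eqI) (auto simp: algebra_simps)
  have cS: "card S = (\<Sum>B\<in>Bs. card {B*q..<B*q+q})"
    by (subst Sdec, rule card_UN_disjoint[OF fBs]) (use disj in auto)
  have "S \<inter> Bad = (\<Union>B\<in>Bs. {j. B*q \<le> j \<and> j < B*q+q \<and> j \<in> Bad})"
    by (subst Sdec) auto
  then have "card (S \<inter> Bad) = (\<Sum>B\<in>Bs. card {j. B*q \<le> j \<and> j < B*q+q \<and> j \<in> Bad})"
    by (simp only:, intro card_UN_disjoint[OF fBs]) (auto dest: cellB)
  then have "real (card (S \<inter> Bad)) = (\<Sum>B\<in>Bs. real (card {j. B*q \<le> j \<and> j < B*q+q \<and> j \<in> Bad}))"
    by simp
  also have "\<dots> \<le> (\<Sum>B\<in>Bs. \<rho> * q)" by (intro sum_mono cell Bs_lt)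
  also have "\<dots> = \<rho> * card S" using cS by simp
  finally show ?thesis .
qed


lemma exists_pow2:
  fixes y :: real assumes "y \<ge> 1"
  shows "\<exists>c::nat. 2^c \<le> y \<and> y < 2^(Suc c)"
proof -
  have ex: "\<exists>m. y < (2::real)^m" using real_arch_pow[of 2 y] by auto
  define m where "m = (LEAST m. y < (2::real)^m)"
  have m1: "y < 2^m" unfolding m_def by (rule LeastI_ex[OF ex])
  have m0: "m \<noteq> 0"
  proof
    assume "m = 0" then show False using m1 assms by simp
  qed
  have "m - 1 < m" using m0 by simp
  then have "\<not> y < 2^(m-1)" unfolding m_def by (rule not_less_Least)
  then show ?thesis using m1 m0 by (intro exI[of _ "m - 1"]) auto
qed

lemma arith_bound:
  fixes R l d :: real
  assumes R: "R \<ge> 16" and l: "0 < l" "l \<le> d / 8" and d: "d \<le> 1/2"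
  shows "(R + 2 * d + 1) * (2 * d / l + 2) \<le> 3 * d * (R / l)"
proof -
  have d0: "d > 0" using l by linarith
  have "(R + 2 * d + 1) * (2 * d / l + 2) = (R + 2 * d + 1) * (2 * d + 2 * l) / l"
    using l by (simp add: field_simps)
  also have "\<dots> \<le> 3 * d * R / l"
  proof (rule divide_right_mono)
    have a0: "l * R \<le> d / 8 * R" using l R by (intro mult_right_mono) auto
    have a: "l * R \<le> (d * R) / 8" using a0 by simp
    have b0: "(2 * d + 1) * (2 * d + 2 * l) \<le> 2 * (2 * d + 2 * l)"
      using d l d0 by (intro mult_right_mono) auto
    have b: "(2 * d + 1) * (2 * d + 2 * l) \<le> 4 * d + 4 * l" using b0 by simp
    have c: "16 * d \<le> d * R" using R d0 by (simp add: mult.commute mult_left_mono)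
    have "(R + 2 * d + 1) * (2 * d + 2 * l) = 2 * (d * R) + 2 * (l * R) + (2 * d + 1) * (2 * d + 2 * l)"
      by (simp add: algebra_simps)
    also have "\<dots> \<le> 3 * (d * R)" using a b c l by linarith
    also have "\<dots> = 3 * d * R" by simp
    finally show "(R + 2 * d + 1) * (2 * d + 2 * l) \<le> 3 * d * R" .
  qed (use l in auto)
  finally show ?thesis by simp
qed


lemma core:
  fixes n h :: nat and v :: "nat \<Rightarrow> real" and w :: real
  assumes n1: "n \<ge> 1" and h1: "h \<ge> 1" and w256: "w \<ge> 256" and hw: "24 * real h \<le> w"
    and pos: "\<forall>i\<in>{1..n}. v i > 0"
    and mono: "\<forall>i j. 1 \<le> i \<longrightarrow> i < j \<longrightarrow> j \<le> n \<longrightarrow> v i < v j"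
    and lac: "\<forall>i. 1 \<le> i \<longrightarrow> i + h \<le> n \<longrightarrow> v (i + h) \<ge> w * v i"
  shows "\<exists>t. \<forall>i\<in>{1..n}. \<forall>m::int. \<bar>t * v i - m\<bar> > 1 / w"
proof -
  define \<delta> where "\<delta> = 1 / w"
  have dpos: "\<delta> > 0" and dw: "\<delta> * w = 1" and dsmall: "\<delta> \<le> 1/2"
    using w256 by (auto simp: \<delta>_def)
  have vpos: "v k > 0" if "1 \<le> k" "k \<le> n" for k using pos that by auto
  have vle: "v i \<le> v k" if "1 \<le> i" "i \<le> k" "k \<le> n" for i k
    using mono that by (cases "i = k") (auto intro: less_imp_le)
  have vn: "v n > 0" using vpos n1 by auto
  define s where "s = \<delta> / (8 * v n)"
  have spos: "s > 0" using dpos vn by (simp add: s_def)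
  have "\<forall>k. \<exists>c::nat. 1 \<le> k \<and> k \<le> n \<longrightarrow> (2^c \<le> v n / v k \<and> v n / v k < 2^(Suc c))"
  proof
    fix k
    show "\<exists>c::nat. 1 \<le> k \<and> k \<le> n \<longrightarrow> (2^c \<le> v n / v k \<and> v n / v k < 2^(Suc c))"
    proof (cases "1 \<le> k \<and> k \<le> n")
      case True
      then have "v n / v k \<ge> 1" using vle[of k n] vpos[of k] by auto
      then show ?thesis using exists_pow2 by blast
    qed auto
  qed
  then obtain ce :: "nat \<Rightarrow> nat" where ce: "\<And>k. 1 \<le> k \<Longrightarrow> k \<le> n \<Longrightarrow> 2^(ce k) \<le> v n / v k \<and> v n / v k < 2^(Suc (ce k))"
    by metis
  obtain c' :: nat where c': "16 / (s * v 1) < 2^c'" using real_arch_pow[of 2 "16/(s * v 1)"] by auto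
  define cx where "cx k = (if k = 0 then max (ce 1) c' else ce k)" for k
  define q where "q k = (2::nat)^(cx k)" for k
  define l where "l k = real (q k) * s * v k" for k
  define bad where "bad k b \<longleftrightarrow> (\<exists>m::int. m - \<delta> \<le> (real b + 1) * l k \<and> real b * l k \<le> m + \<delta>)" for k b
  define N where "N = q 0"
  define S where "S k = {j. j < N \<and> (\<forall>i\<in>{1..k}. \<not> bad i (j div q i))}" for k
  define D where "D = 2 * h"
  define x where "x = 1 / (2 * real D)"
  define \<rho> where "\<rho> = 3 * \<delta>"
  define kp where "kp k = (if D < k then k - D else 0)" for k

  have ce_mono: "ce k \<le> ce i" if "1 \<le> i" "i \<le> k" "k \<le> n" for i k
  proof -
    have "(2::real)^(ce k) \<le> v n / v k" using ce[of k] that by auto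
    also have "\<dots> \<le> v n / v i" using vle[OF that] vpos[of i] vn that by (intro divide_left_mono) auto
    also have "\<dots> < 2^(Suc (ce i))" using ce[of i] that by auto
    finally have lt: "(2::real)^(ce k) < 2^(Suc (ce i))" .
    have "ce k < Suc (ce i)" by (rule power_less_imp_less_exp[OF _ lt]) simp
    then show ?thesis by simp
  qed
  have cx_mono: "cx k \<le> cx i" if "i \<le> k" "k \<le> n" for i k
  proof (cases "i = 0")
    case True
    show ?thesis
    proof (cases "k = 0")
      case False
      then have "ce k \<le> ce 1" using ce_mono[of 1 k] that by auto
      then show ?thesis using True False by (simp add: cx_def)
    qed (use True in simp)
  next
    case False
    then show ?thesis using ce_mono[of i k] that by (simp add: cx_def)
  qed
  have q_pos: "q k > 0" for k by (simp add: q_def)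
  have q_split: "q i = 2^(cx i - cx k) * q k" if "i \<le> k" "k \<le> n" for i k
    using cx_mono[OF that] by (simp add: q_def power_add[symmetric])
  have l_pos: "l k > 0" if "1 \<le> k" "k \<le> n" for k
    using q_pos[of k] spos vpos[OF that] by (simp add: l_def)
  have l_up: "l k \<le> \<delta> / 8" if "1 \<le> k" "k \<le> n" for k
  proof -
    have "l k = 2^(ce k) * s * v k" using that by (simp add: l_def q_def cx_def)
    also have "\<dots> \<le> (v n / v k) * s * v k"
      using ce[OF that] spos vpos[OF that] by (intro mult_right_mono) auto
    also have "\<dots> = \<delta> / 8" using vpos[OF that] vn by (simp add: s_def)
    finally show ?thesis .
  qed
  have l_low: "\<delta> / 16 < l k" if "1 \<le> k" "k \<le> n" for k
  proof -
    have "\<delta> / 8 = (v n / v k) * s * v k" using vpos[OF that] vn by (simp add: s_def)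
    also have "\<dots> < 2^(Suc (ce k)) * s * v k"
      using ce[OF that] spos vpos[OF that] by (intro mult_strict_right_mono) auto
    also have "\<dots> = 2 * l k" using that by (simp add: l_def q_def cx_def)
    finally show ?thesis by simp
  qed
  have lacw2: "v k \<ge> w * w * v (k - D)" if "D < k" "k \<le> n" for k
  proof -
    define i where "i = k - D"
    have i1: "1 \<le> i" and ik: "i + h + h = k" using that h1 by (auto simp: i_def D_def)
    have a: "v (i + h) \<ge> w * v i" using lac i1 ik that by auto
    have b: "v (i + h + h) \<ge> w * v (i + h)" using lac i1 ik that by auto
    have "w * (w * v i) \<le> w * v (i + h)" using a w256 by (intro mult_left_mono) auto
    then show ?thesis using b ik by (simp add: i_def mult.assoc)
  qed
  have coarse: "real (q (kp k)) * s * v k \<ge> 16" if "1 \<le> k" "k \<le> n" for k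
  proof (cases "D < k")
    case True
    define i where "i = k - D"
    have i1: "1 \<le> i" "i \<le> n" using True that by (auto simp: i_def)
    have kpi: "kp k = i" using True by (simp add: kp_def i_def)
    have "16 \<le> w / 16" using w256 by simp
    also have "w / 16 = \<delta> / 16 * w * w" using dw by (simp add: field_simps)
    also have "\<dots> \<le> l i * w * w" using l_low[OF i1] w256 by (intro mult_right_mono) auto
    also have "\<dots> = real (q i) * s * (w * w * v i)" by (simp add: l_def)
    also have "\<dots> \<le> real (q i) * s * v k"
      using lacw2[OF True that(2)] spos q_pos[of i] by (intro mult_left_mono) (auto simp: i_def)
    finally show ?thesis using kpi by simp
  next
    case False
    then have kp0: "kp k = 0" by (simp add: kp_def)
    have "16 = 16 / (s * v 1) * (s * v 1)" using spos vpos[of 1] n1 by simp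
    also have "\<dots> \<le> 2^c' * (s * v 1)" using c' spos vpos[of 1] n1 by (intro mult_right_mono) auto
    also have "\<dots> \<le> real (q 0) * (s * v 1)"
      using spos vpos[of 1] n1 by (intro mult_right_mono) (auto simp: q_def cx_def)
    also have "\<dots> \<le> real (q 0) * (s * v k)"
      using spos vle[of 1 k] that by (intro mult_left_mono) auto
    finally show ?thesis using kp0 by (simp add: mult.assoc)
  qed
  have Ssub: "S k \<subseteq> S k'" if "k' \<le> k" for k k' using that by (auto simp: S_def)
  have SN: "S k \<subseteq> {..<N}" for k by (auto simp: S_def)
  have fS: "finite (S k)" for k using SN finite_subset by blast
  have Sstep: "S k = S (k - 1) - {j. bad k (j div q k)}" if "k \<ge> 1" for k
  proof -
    have e: "{1..k} = insert k {1..k-1}" using that by auto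
    show ?thesis unfolding S_def e by auto
  qed
  have sat: "j' \<in> S k'" if "k' \<le> n" "j \<in> S k'" "j' < N" "j div q k' = j' div q k'" for k' j j'
  proof -
    have "j div q i = j' div q i" if "i \<in> {1..k'}" for i
    proof -
      have qi: "q i = q k' * 2^(cx i - cx k')" using q_split[of i k'] that \<open>k' \<le> n\<close> by (simp add: mult.commute)
      show ?thesis unfolding qi div_mult2_eq using \<open>j div q k' = j' div q k'\<close> by simp
    qed
    then show ?thesis using that by (auto simp: S_def)
  qed
  have qdvdN: "q k' dvd N" if "k' \<le> n" for k'
    using q_split[of 0 k'] that by (simp add: N_def)
  have cellb: "real (card {j. B * q (kp k) \<le> j \<and> j < B * q (kp k) + q (kp k) \<and> j \<in> {j. bad k (j div q k)}})
      \<le> \<rho> * real (q (kp k))" if k: "1 \<le> k" "k \<le> n" for k B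
  proof -
    define r :: nat where "r = 2^(cx (kp k) - cx k)"
    have kpk: "kp k \<le> k" by (simp add: kp_def)
    have qr: "q (kp k) = r * q k" using q_split[OF kpk k(2)] by (simp add: r_def)
    have seteq: "{j. B * q (kp k) \<le> j \<and> j < B * q (kp k) + q (kp k) \<and> j \<in> {j. bad k (j div q k)}}
       = {j. (B * r) * q k \<le> j \<and> j < (B * r + r) * q k \<and> bad k (j div q k)}"
      by (simp add: qr algebra_simps)
    have c1: "card {j. (B * r) * q k \<le> j \<and> j < (B * r + r) * q k \<and> bad k (j div q k)}
        \<le> q k * card {b. B * r \<le> b \<and> b < B * r + r \<and> bad k b}"
      by (rule points_in_cell[OF q_pos])
    have c2: "real (card {b. B * r \<le> b \<and> b < B * r + r \<and> bad k b})
        \<le> (r * l k + 2 * \<delta> + 1) * (2 * \<delta> / l k + 2)"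
      unfolding bad_def using bad_blocks_card[of "l k" \<delta> "B * r" r] l_pos[OF k] dpos by simp
    have R: "real r * l k \<ge> 16" using coarse[OF k] by (simp add: l_def qr mult.assoc)
    have c3: "(r * l k + 2 * \<delta> + 1) * (2 * \<delta> / l k + 2) \<le> 3 * \<delta> * (r * l k / l k)"
      by (rule arith_bound[OF R l_pos[OF k] l_up[OF k] dsmall])
    have c4: "r * l k / l k = r" using l_pos[OF k] by simp
    have "real (card {j. B * q (kp k) \<le> j \<and> j < B * q (kp k) + q (kp k) \<and> j \<in> {j. bad k (j div q k)}})
       \<le> real (q k) * real (card {b. B * r \<le> b \<and> b < B * r + r \<and> bad k b})"
      unfolding seteq using of_nat_mono[OF c1] by simp
    also have "\<dots> \<le> real (q k) * (3 * \<delta> * r)"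
      using c2 c3 c4 by (intro mult_left_mono) auto
    also have "\<dots> = \<rho> * real (q (kp k))" by (simp add: \<rho>_def qr)
    finally show ?thesis .
  qed
  have boundk: "real (card (S (kp k) \<inter> {j. bad k (j div q k)})) \<le> \<rho> * card (S (kp k))"
    if k: "1 \<le> k" "k \<le> n" for k
  proof (rule saturated_bound[OF q_pos])
    have kpn: "kp k \<le> n" using k by (auto simp: kp_def)
    show "q (kp k) dvd N" by (rule qdvdN[OF kpn])
    show "S (kp k) \<subseteq> {..<N}" by (rule SN)
    show "j' \<in> S (kp k)" if "j \<in> S (kp k)" "j' < N" "j div q (kp k) = j' div q (kp k)" for j j'
      by (rule sat[OF kpn that])
    show "real (card {j. B * q (kp k) \<le> j \<and> j < B * q (kp k) + q (kp k) \<and> j \<in> {j. bad k (j div q k)}})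
      \<le> \<rho> * real (q (kp k))" for B by (rule cellb[OF k])
  qed
  have cardstep: "real (card (S (k - 1))) = real (card (S k)) + real (card (S (k - 1) \<inter> {j. bad k (j div q k)}))"
    if "k \<ge> 1" for k
  proof -
    have "S (k - 1) = S k \<union> (S (k - 1) \<inter> {j. bad k (j div q k)})" using Sstep[OF that] by auto
    moreover have "S k \<inter> (S (k - 1) \<inter> {j. bad k (j div q k)}) = {}" using Sstep[OF that] by auto
    ultimately have "card (S (k - 1)) = card (S k) + card (S (k - 1) \<inter> {j. bad k (j div q k)})"
      using fS by (metis card_Un_disjoint finite_Int)
    then show ?thesis by simp
  qed
  have D2: "D \<ge> 2" using h1 by (simp add: D_def)
  have xpos: "x > 0" and xsmall: "x \<le> 1/4" using D2 by (auto simp: x_def field_simps)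
  have xD: "x * (real D - 1) \<le> 1/2" using D2 by (simp add: x_def field_simps)
  have rhox: "2 * \<rho> \<le> x"
  proof -
    have "2 * \<rho> * (2 * real D) = 24 * real h * \<delta>" by (simp add: \<rho>_def D_def)
    also have "\<dots> \<le> w * \<delta>" using hw dpos by (intro mult_right_mono) auto
    also have "\<dots> = 1" using dw by (simp add: mult.commute)
    finally show ?thesis using D2 by (simp add: x_def field_simps)
  qed
  have chain: "k \<le> n \<Longrightarrow> \<forall>m. 1 \<le> m \<longrightarrow> m \<le> k \<longrightarrow> real (card (S m)) \<ge> (1 - x) * card (S (m - 1))" for k
  proof (induction k)
    case 0
    then show ?case by simp
  next
    case (Suc k)
    have IH: "real (card (S m)) \<ge> (1 - x) * card (S (m - 1))" if "1 \<le> m" "m \<le> k" for m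
      using Suc that by auto
    define k0 where "k0 = kp (Suc k)"
    have k0k: "k0 \<le> k" using h1 by (auto simp: k0_def kp_def D_def)
    define C0 where "C0 = real (card (S k0))"
    have lin: "k0 \<le> m' \<longrightarrow> m' \<le> k \<longrightarrow> real (card (S m')) \<ge> C0 - real (m' - k0) * x * C0" for m'
    proof (induction m')
      case 0
      then show ?case by (simp add: C0_def)
    next
      case (Suc m')
      show ?case
      proof (intro impI)
        assume a: "k0 \<le> Suc m'" "Suc m' \<le> k"
        show "real (card (S (Suc m'))) \<ge> C0 - real (Suc m' - k0) * x * C0"
        proof (cases "k0 = Suc m'")
          case True
          then show ?thesis by (simp add: C0_def)
        next
          case False
          then have km: "k0 \<le> m'" using a by simp
          have i1: "real (card (S m')) \<ge> C0 - real (m' - k0) * x * C0" using Suc.IH km a by simp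
          have i2: "real (card (S (Suc m'))) \<ge> (1 - x) * card (S m')" using IH[of "Suc m'"] a by simp
          have i3: "x * real (card (S m')) \<le> x * C0"
            using card_mono[OF fS Ssub[OF km]] xpos unfolding C0_def by (intro mult_left_mono) auto
          have e: "real (Suc m' - k0) * x * C0 = real (m' - k0) * x * C0 + x * C0"
            using km by (simp add: Suc_diff_le algebra_simps)
          show ?thesis using i1 i2 i3 e by (simp add: algebra_simps)
        qed
      qed
    qed
    have kk0: "real (k - k0) \<le> real D - 1"
      using D2 by (cases "D < Suc k") (auto simp: k0_def kp_def)
    have C0nn: "C0 \<ge> 0" by (simp add: C0_def)
    have "real (k - k0) * x * C0 \<le> (real D - 1) * x * C0"
      using kk0 xpos C0nn by (intro mult_right_mono) auto
    moreover have "(real D - 1) * x * C0 \<le> 1/2 * C0"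
    proof -
      have "(real D - 1) * x \<le> 1/2" using xD by (simp add: mult.commute)
      then show ?thesis by (rule mult_right_mono[OF _ C0nn])
    qed
    moreover have "real (card (S k)) \<ge> C0 - real (k - k0) * x * C0" using lin[of k] k0k by simp
    ultimately have half: "real (card (S k)) \<ge> C0 / 2"
      by linarith
    have Sk: "Suc k \<le> n" using Suc by simp
    have b1: "real (card (S k \<inter> {j. bad (Suc k) (j div q (Suc k))}))
       \<le> real (card (S k0 \<inter> {j. bad (Suc k) (j div q (Suc k))}))"
      using Ssub[OF k0k] fS by (intro of_nat_mono card_mono) auto
    have b2: "real (card (S k0 \<inter> {j. bad (Suc k) (j div q (Suc k))})) \<le> \<rho> * C0"
      using boundk[of "Suc k"] Sk unfolding k0_def C0_def by simp
    have b3: "\<rho> * C0 \<le> x * real (card (S k))"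
    proof -
      have "\<rho> * C0 \<le> \<rho> * (2 * real (card (S k)))" using half dpos by (intro mult_left_mono) (auto simp: \<rho>_def)
      also have "\<dots> = (2 * \<rho>) * real (card (S k))" by simp
      also have "\<dots> \<le> x * real (card (S k))" using rhox by (intro mult_right_mono) auto
      finally show ?thesis .
    qed
    have "real (card (S (Suc k))) \<ge> (1 - x) * card (S k)"
      using cardstep[of "Suc k"] b1 b2 b3 by (simp add: algebra_simps)
    then show ?case using IH by (metis le_Suc_eq diff_Suc_1)
  qed
  have posS: "m \<le> n \<Longrightarrow> card (S m) > 0" for m
  proof (induction m)
    case 0
    have "S 0 = {..<N}" by (auto simp: S_def)
    then show ?case using q_pos[of 0] by (simp add: N_def)
  next
    case (Suc m)
    have "real (card (S (Suc m))) \<ge> (1 - x) * card (S m)" using chain[OF Suc.prems] by auto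
    moreover have "(1 - x) * card (S m) > 0" using Suc xsmall by simp
    ultimately show ?case by simp
  qed
  have "card (S n) > 0" by (rule posS) simp
  then have "S n \<noteq> {}" by (metis card.empty less_irrefl)
  then obtain j where j: "j \<in> S n" by blast
  show ?thesis
  proof (intro exI[of _ "real j * s"] ballI allI)
    fix i and m :: int assume i: "i \<in> {1..n}"
    then have i1: "1 \<le> i" "i \<le> n" by auto
    have nb: "\<not> bad i (j div q i)" using j i by (auto simp: S_def)
    define b where "b = j div q i"
    have bj: "b * q i \<le> j" "j < b * q i + q i"
      using div_mult_mod_eq[of j "q i"] mod_less_divisor[OF q_pos[of i], of j] unfolding b_def by linarith+
    have sv: "s * v i > 0" using spos vpos[OF i1] by simp
    have t1: "real b * l i \<le> real j * s * v i"
    proof -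
      have "real (b * q i) \<le> real j" using bj by linarith
      then have "real (b * q i) * (s * v i) \<le> real j * (s * v i)" using sv by (intro mult_right_mono) auto
      then show ?thesis by (simp add: l_def mult.assoc)
    qed
    have t2: "real j * s * v i \<le> (real b + 1) * l i"
    proof -
      have "real j \<le> real (b * q i + q i)" using bj by linarith
      then have "real j * (s * v i) \<le> real (b * q i + q i) * (s * v i)" using sv by (intro mult_right_mono) auto
      then show ?thesis by (simp add: l_def algebra_simps)
    qed
    show "\<bar>real j * s * v i - real_of_int m\<bar> > 1 / w"
    proof (rule ccontr)
      assume "\<not> \<bar>real j * s * v i - real_of_int m\<bar> > 1 / w"
      then have "\<bar>real j * s * v i - real_of_int m\<bar> \<le> \<delta>" by (simp add: \<delta>_def)
      then have "real_of_int m - \<delta> \<le> (real b + 1) * l i \<and> real b * l i \<le> real_of_int m + \<delta>"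
        using t1 t2 by linarith
      then show False using nb unfolding bad_def b_def by blast
    qed
  qed
qed



theorem theorem12p7:
  fixes c :: int and \<alpha> :: real
  assumes "\<alpha> > 0"
  shows "\<forall>\<^sub>F n in sequentially.
    \<forall>v :: nat \<Rightarrow> real.
      (let h = nat \<lfloor>(real n + real_of_int c) / (12 * exp 1 * \<alpha>)\<rfloor>;
           w = (real n + real_of_int c) / \<alpha>
       in ((\<forall>i\<in>{1..n}. v i > 0) \<and>
           (\<forall>i j. 1 \<le> i \<longrightarrow> i < j \<longrightarrow> j \<le> n \<longrightarrow> v i < v j) \<and>
           (\<forall>i. 1 \<le> i \<longrightarrow> i + h \<le> n \<longrightarrow> v (i + h) \<ge> w * v i))
          \<longrightarrow> max_loneliness n v > \<alpha> / (real n + real_of_int c))"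
proof -
  define W where "W = 256 + 12 * exp (1::real)"
  define N0 where "N0 = max 1 (nat \<lceil>\<alpha> * W - real_of_int c\<rceil>)"
  have e2: "exp (1::real) \<ge> 2" using exp_ge_add_one_self[of "1::real"] by simp
  show ?thesis unfolding eventually_sequentially
  proof (intro exI[of _ N0] allI impI)
    fix n v assume nN: "N0 \<le> n"
    define h where "h = nat \<lfloor>(real n + real_of_int c) / (12 * exp 1 * \<alpha>)\<rfloor>"
    define w where "w = (real n + real_of_int c) / \<alpha>"
    have n1: "n \<ge> 1" using nN by (simp add: N0_def)
    have "real n \<ge> \<alpha> * W - real_of_int c"
    proof -
      have "real (nat \<lceil>\<alpha> * W - real_of_int c\<rceil>) \<le> real n" using nN by (simp add: N0_def)
      moreover have "\<alpha> * W - real_of_int c \<le> real (nat \<lceil>\<alpha> * W - real_of_int c\<rceil>)"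
        by (rule real_nat_ceiling_ge)
      ultimately show ?thesis by linarith
    qed
    then have aWle: "\<alpha> * W \<le> real n + real_of_int c" by linarith
    then have wW: "W \<le> w" using assms by (simp add: w_def field_simps mult.commute)
    have w256: "w \<ge> 256" using wW e2 by (simp add: W_def)
    have hw_eq: "(real n + real_of_int c) / (12 * exp 1 * \<alpha>) = w / (12 * exp 1)"
      using assms by (simp add: w_def field_simps)
    have wpos: "w / (12 * exp 1) \<ge> 1" using wW by (simp add: W_def field_simps)
    have fl: "\<lfloor>1::real\<rfloor> \<le> \<lfloor>w / (12 * exp 1)\<rfloor>" by (rule floor_mono[OF wpos])
    have "nat \<lfloor>1::real\<rfloor> \<le> nat \<lfloor>w / (12 * exp 1)\<rfloor>" by (rule nat_mono[OF fl])
    then have h1: "h \<ge> 1" unfolding h_def hw_eq by simp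
    have y0: "0 \<le> \<lfloor>w / (12 * exp 1)\<rfloor>" using fl by (simp only: floor_one)
    have "real h = real_of_int \<lfloor>w / (12 * exp 1)\<rfloor>" unfolding h_def hw_eq using y0 by simp
    then have "real h \<le> w / (12 * exp 1)" using of_int_floor_le[of "w / (12 * exp 1)"] by linarith
    also have "\<dots> \<le> w / 24" using e2 w256 by (intro divide_left_mono) auto
    finally have hw: "24 * real h \<le> w" by simp
    show "let h = nat \<lfloor>(real n + real_of_int c) / (12 * exp 1 * \<alpha>)\<rfloor>;
           w = (real n + real_of_int c) / \<alpha>
       in ((\<forall>i\<in>{1..n}. v i > 0) \<and>
           (\<forall>i j. 1 \<le> i \<longrightarrow> i < j \<longrightarrow> j \<le> n \<longrightarrow> v i < v j) \<and>
           (\<forall>i. 1 \<le> i \<longrightarrow> i + h \<le> n \<longrightarrow> v (i + h) \<ge> w * v i))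
          \<longrightarrow> max_loneliness n v > \<alpha> / (real n + real_of_int c)"
      unfolding Let_def h_def[symmetric] w_def[symmetric]
    proof (intro impI)
      assume H: "(\<forall>i\<in>{1..n}. v i > 0) \<and>
           (\<forall>i j. 1 \<le> i \<longrightarrow> i < j \<longrightarrow> j \<le> n \<longrightarrow> v i < v j) \<and>
           (\<forall>i. 1 \<le> i \<longrightarrow> i + h \<le> n \<longrightarrow> v (i + h) \<ge> w * v i)"
      obtain t where t: "\<forall>i\<in>{1..n}. \<forall>m::int. \<bar>t * v i - m\<bar> > 1 / w"
        using core[OF n1 h1 w256 hw] H by blast
      have aw: "\<alpha> / (real n + real_of_int c) = 1 / w" by (simp add: w_def)
      define f where "f t = Min ((\<lambda>i. dist_nint (t * v i)) ` {1..n})" for t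
      have ne: "{1..n} \<noteq> {}" using n1 by simp
      have ft: "f t > 1 / w" unfolding f_def using ne
        by (subst Min_gr_iff) (auto intro!: dist_nint_gt simp: t)
      have bdd: "bdd_above (range f)"
      proof (rule bdd_aboveI2)
        fix t'
        have "f t' \<le> dist_nint (t' * v 1)" unfolding f_def using n1 by (intro Min_le) auto
        also have "\<dots> \<le> 1/2" by (rule dist_nint_le)
        finally show "f t' \<le> 1/2" .
      qed
      have "f t \<le> (SUP t. f t)" by (rule cSUP_upper[OF _ bdd]) simp
      then have "max_loneliness n v > 1 / w" using ft unfolding max_loneliness_def f_def by linarith
      then show "max_loneliness n v > \<alpha> / (real n + real_of_int c)" using aw by simp
    qed
  qed
qed

end
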